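(* Let $u,s,s',V,\alpha$ be real numbers and set $$\overline{u}=2u(s-s'),\qquad \gamma=\frac{s'}{6}(1-\alpha)-u(s-s')V.$$ Define \begin{align*} R_{0,0}&=Vsu-\tfrac12Vs-Vs'u+\tfrac16\alpha s'+su-\tfrac12 s-s'u-\tfrac16 s'+1,\\ R_{0,1}&=Vsu-\tfrac12Vs-Vs'u+\tfrac16\alpha s'+\tfrac13 s',\\ R_{0,2}&=Vsu-\tfrac12Vs-Vs'u+\tfrac16\alpha s'-su+\tfrac12 s+s'u-\tfrac16 s',\\ R_{1,0}&=-2Vsu+2Vs'u-\tfrac13\alpha s'-2su+2s'u+\tfrac13 s',\\ R_{1,1}&=-2Vsu+2Vs'u-\tfrac13\alpha s'-\tfrac23 s'+1,\\ R_{1,2}&=-2Vsu+2Vs'u-\tfrac13\alpha s'+2su-2s'u+\tfrac13 s',\\ R_{2,0}&=Vsu+\tfrac12Vs-Vs'u+\tfrac16\alpha s'+su+\tfrac12 s-s'u-\tfrac16 s',\\ R_{2,1}&=Vsu+\tfrac12Vs-Vs'u+\tfrac16\alpha s'+\tfrac13 s',\\ R_{2,2}&=Vsu+\tfrac12Vs-Vs'u+\tfrac16\alpha s'-su-\tfrac12 s+s'u-\tfrac16 s'+1. \end{align*} Then $R_{i,j}\ge 0$ for all $i,j\in\{0,1,2\}$ if and only if $$\max\bigl(s'-1,\,|\overline{u}|\bigr)\le 2\gamma\le \min\bigl(2-s-|\overline{u}-sV|,\; s-|\overline{u}+sV|,\; s'-|sV|\bigr).$$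
   Context: The quantities $R_{i,j}$ are the entries of the relaxation matrix of the D1Q3 lattice Boltzmann scheme (velocities $-1,0,1$) with relative velocity $u$, advection velocity parameter $V$, equilibrium parameter $\alpha$ and relaxation parameters $s$ (for the first-order moment) and $s'$ (for the second-order moment); their non-negativity is equivalent to the relaxation step preserving non-negativity of the particle distributions. *)

theory Defs
  imports Complex_Main
begin

definition R :: "real \<Rightarrow> real \<Rightarrow> real \<Rightarrow> real \<Rightarrow> real \<Rightarrow> nat \<Rightarrow> nat \<Rightarrow> real" where
  "R u s sp V \<alpha> i j =
    (if i = 0 \<and> j = 0 then V*s*u - 1/2*V*s - V*sp*u + 1/6*\<alpha>*sp + s*u - 1/2*s - sp*u - 1/6*sp + 1
     else if i = 0 \<and> j = 1 then V*s*u - 1/2*V*s - V*sp*u + 1/6*\<alpha>*sp + 1/3*sp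
     else if i = 0 \<and> j = 2 then V*s*u - 1/2*V*s - V*sp*u + 1/6*\<alpha>*sp - s*u + 1/2*s + sp*u - 1/6*sp
     else if i = 1 \<and> j = 0 then -2*V*s*u + 2*V*sp*u - 1/3*\<alpha>*sp - 2*s*u + 2*sp*u + 1/3*sp
     else if i = 1 \<and> j = 1 then -2*V*s*u + 2*V*sp*u - 1/3*\<alpha>*sp - 2/3*sp + 1
     else if i = 1 \<and> j = 2 then -2*V*s*u + 2*V*sp*u - 1/3*\<alpha>*sp + 2*s*u - 2*sp*u + 1/3*sp
     else if i = 2 \<and> j = 0 then V*s*u + 1/2*V*s - V*sp*u + 1/6*\<alpha>*sp + s*u + 1/2*s - sp*u - 1/6*sp
     else if i = 2 \<and> j = 1 then V*s*u + 1/2*V*s - V*sp*u + 1/6*\<alpha>*sp + 1/3*sp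
     else V*s*u + 1/2*V*s - V*sp*u + 1/6*\<alpha>*sp - s*u - 1/2*s + sp*u - 1/6*sp + 1)"

definition ubar :: "real \<Rightarrow> real \<Rightarrow> real \<Rightarrow> real" where
  "ubar u s sp = 2*u*(s - sp)"

definition gam :: "real \<Rightarrow> real \<Rightarrow> real \<Rightarrow> real \<Rightarrow> real \<Rightarrow> real" where
  "gam u s sp V \<alpha> = sp/6*(1 - \<alpha>) - u*(s - sp)*V"

end

theory Submission
  imports Defs
begin

lemma aux:
  fixes G b c s sp :: real
  shows "(0 \<le> (2 - G - s + (b - c)) / 2 \<and> 0 \<le> (sp - c - G) / 2 \<and>
      0 \<le> (s - G - (b + c)) / 2 \<and> 0 \<le> G - b \<and> 0 \<le> G - sp + 1 \<and> 0 \<le> G + b \<and>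
      0 \<le> (s - G + (b + c)) / 2 \<and> 0 \<le> (sp + c - G) / 2 \<and> 0 \<le> (2 - G - s - (b - c)) / 2) =
     ((sp - 1 \<le> G \<and> \<bar>b\<bar> \<le> G) \<and> G \<le> 2 - s - \<bar>b - c\<bar> \<and>
      G \<le> s - \<bar>b + c\<bar> \<and> G \<le> sp - \<bar>c\<bar>)"
  by (auto simp: abs_real_def)

theorem proposition2:
  fixes u s sp V \<alpha> :: real
  shows "(\<forall>i\<in>{0,1,2::nat}. \<forall>j\<in>{0,1,2::nat}. R u s sp V \<alpha> i j \<ge> 0) \<longleftrightarrow>
     (max (sp - 1) \<bar>ubar u s sp\<bar> \<le> 2 * gam u s sp V \<alpha> \<and>
      2 * gam u s sp V \<alpha> \<le> min (2 - s - \<bar>ubar u s sp - s*V\<bar>)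
                                (min (s - \<bar>ubar u s sp + s*V\<bar>) (sp - \<bar>s*V\<bar>)))"
proof -
  define G where "G = 2 * gam u s sp V \<alpha>"
  define b where "b = ubar u s sp"
  have e00: "R u s sp V \<alpha> 0 0 = (2 - G - s + (b - s*V))/2"
    by (simp add: R_def G_def b_def gam_def ubar_def field_simps) (simp add: algebra_simps)?
  have e22: "R u s sp V \<alpha> 2 2 = (2 - G - s - (b - s*V))/2"
    by (simp add: R_def G_def b_def gam_def ubar_def field_simps) (simp add: algebra_simps)?
  have e02: "R u s sp V \<alpha> 0 2 = (s - G - (b + s*V))/2"
    by (simp add: R_def G_def b_def gam_def ubar_def field_simps) (simp add: algebra_simps)?
  have e20: "R u s sp V \<alpha> 2 0 = (s - G + (b + s*V))/2"
    by (simp add: R_def G_def b_def gam_def ubar_def field_simps) (simp add: algebra_simps)?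
  have e01: "R u s sp V \<alpha> 0 1 = (sp - s*V - G)/2"
    by (simp add: R_def G_def b_def gam_def ubar_def field_simps) (simp add: algebra_simps)?
  have e21: "R u s sp V \<alpha> 2 1 = (sp + s*V - G)/2"
    by (simp add: R_def G_def b_def gam_def ubar_def field_simps) (simp add: algebra_simps)?
  have e11: "R u s sp V \<alpha> 1 1 = G - sp + 1"
    by (simp add: R_def G_def b_def gam_def ubar_def field_simps) (simp add: algebra_simps)?
  have e10: "R u s sp V \<alpha> 1 0 = G - b"
    by (simp add: R_def G_def b_def gam_def ubar_def field_simps) (simp add: algebra_simps)?
  have e12: "R u s sp V \<alpha> 1 2 = G + b"
    by (simp add: R_def G_def b_def gam_def ubar_def field_simps) (simp add: algebra_simps)?
  have q: "(\<forall>i\<in>{0,1,2::nat}. \<forall>j\<in>{0,1,2::nat}. R u s sp V \<alpha> i j \<ge> 0) \<longleftrightarrow>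
    (R u s sp V \<alpha> 0 0 \<ge> 0 \<and> R u s sp V \<alpha> 0 1 \<ge> 0 \<and> R u s sp V \<alpha> 0 2 \<ge> 0 \<and>
     R u s sp V \<alpha> 1 0 \<ge> 0 \<and> R u s sp V \<alpha> 1 1 \<ge> 0 \<and> R u s sp V \<alpha> 1 2 \<ge> 0 \<and>
     R u s sp V \<alpha> 2 0 \<ge> 0 \<and> R u s sp V \<alpha> 2 1 \<ge> 0 \<and> R u s sp V \<alpha> 2 2 \<ge> 0)"
    by auto
  show ?thesis
    unfolding q G_def[symmetric] b_def[symmetric] e00 e01 e02 e10 e11 e12 e20 e21 e22
    by (simp only: max.bounded_iff min.bounded_iff) (rule aux)
qed

end
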